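(* Let $(\varepsilon_t)_{t\in\mathbb{Z}}$ be i.i.d. copies of a random variable $\varepsilon$, let $Y$ be a measurable function and $X_t=Y(\varepsilon_t,\varepsilon_{t-1},\varepsilon_{t-2},\dots)$. Let $(\varepsilon_t^* )_{t\in\mathbb{Z}}$ be an i.i.d. copy of $(\varepsilon_t)_{t\in\mathbb{Z}}$, independent of it, and $X_t'=Y(\varepsilon_t,\dots,\varepsilon_1,\varepsilon_0^*,\varepsilon_{-1}^*,\dots)$. Let $F_X(x)=\mathbb{P}(X_0\le x)$, fix $\tau\in(0,1)$ and let $\xi_0(\tau)=\inf\{x:F_X(x)\ge\tau\}$. Suppose $F_X$ is Lipschitz continuous in a neighborhood of $\xi_0(\tau)$ and that $(\mathbb{E}|X_n-X_n'|^\alpha)^{1/\alpha}=O(\varrho^n)$ as $n\to\infty$ for some $\alpha>0$ and $\varrho\in(0,1)$. Then there exist $\delta>0$ and $\sigma\in(0,1)$ such that $$\sup_{\xi\in\mathbb{R}:\,|\xi-\xi_0(\tau)|\le\delta}\big(\mathbb{E}|1\{X_n<\xi\}-1\{X_n'<\xi\}|^2\big)^{1/2}=O(\sigma^n).$$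
   Context: $1\{\cdot\}$ denotes the indicator function. *)

theory Defs
  imports "HOL-Probability.Probability" "HOL-Library.Landau_Symbols"
begin

definition Xproc :: "((nat \<Rightarrow> 'b) \<Rightarrow> real) \<Rightarrow> (int \<Rightarrow> 'a \<Rightarrow> 'b) \<Rightarrow> int \<Rightarrow> 'a \<Rightarrow> real" where
  "Xproc Y eps t \<omega> = Y (\<lambda>k. eps (t - int k) \<omega>)"

definition Xcoupled :: "((nat \<Rightarrow> 'b) \<Rightarrow> real) \<Rightarrow> (int \<Rightarrow> 'a \<Rightarrow> 'b) \<Rightarrow> (int \<Rightarrow> 'a \<Rightarrow> 'b)
    \<Rightarrow> nat \<Rightarrow> 'a \<Rightarrow> real" where
  "Xcoupled Y eps epss n \<omega> =
     Y (\<lambda>k. if k < n then eps (int n - int k) \<omega> else epss (int n - int k) \<omega>)"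

end

theory Submission imports Defs begin

lemma indep_sets_reindex:
  assumes "prob_space M" "prob_space.indep_sets M F (g ` J)" "inj_on g J"
  shows "prob_space.indep_sets M (\<lambda>j. F (g j)) J"
proof -
  interpret prob_space M by fact
  show ?thesis
  proof (rule indep_setsI)
    fix i assume "i \<in> J" then show "F (g i) \<subseteq> events"
      using assms(2) unfolding indep_sets_def by auto
  next
    fix A K assume K: "K \<noteq> {}" "K \<subseteq> J" "finite K" "\<forall>j\<in>K. A j \<in> F (g j)"
    define B where "B i = A (inv_into K g i)" for i
    have inj: "inj_on g K" using assms(3) K(2) inj_on_subset by blast
    have B: "B (g j) = A j" if "j \<in> K" for j
      using inj that by (simp add: B_def)
    have "prob (\<Inter>i\<in>g ` K. B i) = (\<Prod>i\<in>g ` K. prob (B i))"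
      by (rule indep_setsD[OF assms(2)]) (use K B in auto)
    also have "(\<Inter>i\<in>g ` K. B i) = (\<Inter>j\<in>K. A j)" using B by auto
    also have "(\<Prod>i\<in>g ` K. prob (B i)) = (\<Prod>j\<in>K. prob (A j))"
      using prod.reindex[OF inj, of "\<lambda>i. prob (B i)"] B by simp
    finally show "prob (\<Inter>j\<in>K. A j) = (\<Prod>j\<in>K. prob (A j))" .
  qed
qed

lemma indep_vars_reindex:
  assumes "prob_space M" "prob_space.indep_vars M M' X I" "inj_on g J" "g ` J \<subseteq> I"
  shows "prob_space.indep_vars M (\<lambda>j. M' (g j)) (\<lambda>j. X (g j)) J"
proof -
  interpret prob_space M by fact
  have "indep_sets (\<lambda>i. sigma_sets (space M) { X i -` A \<inter> space M | A. A \<in> sets (M' i)}) I"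
    and rv: "\<forall>i\<in>I. random_variable (M' i) (X i)"
    using assms(2) unfolding indep_vars_def by auto
  then have "indep_sets (\<lambda>i. sigma_sets (space M) { X i -` A \<inter> space M | A. A \<in> sets (M' i)}) (g ` J)"
    using indep_sets_mono_index assms(4) by blast
  from indep_sets_reindex[OF assms(1) this assms(3)]
  show ?thesis unfolding indep_vars_def using rv assms(4) by auto
qed

lemma meas_Xproc:
  assumes "\<And>t. eps t \<in> measurable M N" "Y \<in> borel_measurable (PiM UNIV (\<lambda>_::nat. N))"
  shows "Xproc Y eps t \<in> borel_measurable M"
proof -
  have "(\<lambda>x. \<lambda>i\<in>UNIV. eps (t - int i) x) \<in> measurable M (PiM UNIV (\<lambda>_::nat. N))"
    using assms(1) by (intro measurable_restrict) auto
  then have "(\<lambda>\<omega>. \<lambda>k::nat. eps (t - int k) \<omega>) \<in> measurable M (PiM UNIV (\<lambda>_::nat. N))"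
    by (simp add: restrict_def)
  from measurable_compose[OF this assms(2)] show ?thesis
    by (simp add: Xproc_def[abs_def])
qed

lemma meas_Xcoupled:
  assumes "\<And>t. eps t \<in> measurable M N" "\<And>t. epss t \<in> measurable M N"
    "Y \<in> borel_measurable (PiM UNIV (\<lambda>_::nat. N))"
  shows "Xcoupled Y eps epss n \<in> borel_measurable M"
proof -
  have "(\<lambda>x. \<lambda>i\<in>UNIV. (if i < n then eps (int n - int i) x else epss (int n - int i) x))
     \<in> measurable M (PiM UNIV (\<lambda>_::nat. N))"
    using assms(1,2) by (intro measurable_restrict) auto
  then have "(\<lambda>\<omega>. \<lambda>k::nat. if k < n then eps (int n - int k) \<omega> else epss (int n - int k) \<omega>)
     \<in> measurable M (PiM UNIV (\<lambda>_::nat. N))"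
    by (simp add: restrict_def)
  from measurable_compose[OF this assms(3)] show ?thesis
    by (simp add: Xcoupled_def[abs_def] if_distrib)
qed

lemma stationary:
  assumes M: "prob_space M"
    and meas_eps: "\<And>t. eps t \<in> measurable M N"
    and meas_epss: "\<And>t. epss t \<in> measurable M N"
    and indep: "prob_space.indep_vars M (\<lambda>_. N)
                  (\<lambda>i. case i of Inl t \<Rightarrow> eps t | Inr t \<Rightarrow> epss t) UNIV"
    and ident_eps: "\<And>t. distr M N (eps t) = distr M N (eps 0)"
    and meas_Y: "Y \<in> borel_measurable (PiM UNIV (\<lambda>_::nat. N))"
  shows "distr M borel (Xproc Y eps t) = distr (PiM UNIV (\<lambda>_::nat. distr M N (eps 0))) borel Y"
proof -
  interpret prob_space M by fact
  define Z where "Z = (\<lambda>\<omega>. \<lambda>k::nat. eps (t - int k) \<omega>)"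
  have ind: "indep_vars (\<lambda>_. N) (\<lambda>k::nat. eps (t - int k)) UNIV"
    using indep_vars_reindex[OF M indep, of "\<lambda>k::nat. Inl (t - int k)" UNIV]
    by (simp add: inj_on_def)
  have "distr M (PiM UNIV (\<lambda>_::nat. N)) (\<lambda>x. \<lambda>i\<in>UNIV. eps (t - int i) x)
        = (PiM UNIV (\<lambda>i::nat. distr M N (eps (t - int i))))"
    using indep_vars_iff_distr_eq_PiM[where I=UNIV and M'="\<lambda>_. N" and X="\<lambda>k::nat. eps (t - int k)"] ind meas_eps
    by simp
  moreover have "(PiM UNIV (\<lambda>i::nat. distr M N (eps (t - int i)))) = PiM UNIV (\<lambda>_::nat. distr M N (eps 0))"
    by (rule PiM_cong) (auto intro: ident_eps)
  moreover have RZ: "(\<lambda>x. \<lambda>i\<in>UNIV. eps (t - int i) x) = Z" by (simp add: Z_def restrict_def)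
  ultimately have D: "distr M (PiM UNIV (\<lambda>_::nat. N)) Z = PiM UNIV (\<lambda>_::nat. distr M N (eps 0))"
    by (simp add: Z_def)
  have mZ: "Z \<in> measurable M (PiM UNIV (\<lambda>_::nat. N))"
    unfolding RZ[symmetric] using measurable_restrict[where I=UNIV and X="\<lambda>k::nat. eps (t - int k)" and N=M and M="\<lambda>_. N"] meas_eps
    by simp
  have "Xproc Y eps t = Y \<circ> Z" by (simp add: fun_eq_iff Xproc_def Z_def)
  then have "distr M borel (Xproc Y eps t) = distr (distr M (PiM UNIV (\<lambda>_::nat. N)) Z) borel Y"
    using distr_distr[OF meas_Y mZ] by simp
  then show ?thesis using D by simp
qed

theorem proposition3p1:
  fixes M :: "'a measure" and N :: "'b measure"
    and eps epss :: "int \<Rightarrow> 'a \<Rightarrow> 'b"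
    and Y :: "(nat \<Rightarrow> 'b) \<Rightarrow> real"
    and \<tau> \<alpha> \<rho> :: real
  assumes M: "prob_space M"
    and meas_eps: "\<And>t. eps t \<in> measurable M N"
    and meas_epss: "\<And>t. epss t \<in> measurable M N"
    and indep: "prob_space.indep_vars M (\<lambda>_. N)
                  (\<lambda>i. case i of Inl t \<Rightarrow> eps t | Inr t \<Rightarrow> epss t) UNIV"
    and ident_eps: "\<And>t. distr M N (eps t) = distr M N (eps 0)"
    and ident_epss: "\<And>t. distr M N (epss t) = distr M N (eps 0)"
    and meas_Y: "Y \<in> borel_measurable (PiM UNIV (\<lambda>_::nat. N))"
    and tau: "0 < \<tau>" "\<tau> < 1"
    and lip: "\<exists>r>0. \<exists>L. L-lipschitz_on
                {Inf {x. measure M {\<omega>\<in>space M. Xproc Y eps 0 \<omega> \<le> x} \<ge> \<tau>} - r ..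
                 Inf {x. measure M {\<omega>\<in>space M. Xproc Y eps 0 \<omega> \<le> x} \<ge> \<tau>} + r}
                (\<lambda>x. measure M {\<omega>\<in>space M. Xproc Y eps 0 \<omega> \<le> x})"
    and alpha: "\<alpha> > 0" and rho: "0 < \<rho>" "\<rho> < 1"
    and integ: "eventually (\<lambda>n. integrable M
                  (\<lambda>\<omega>. \<bar>Xproc Y eps (int n) \<omega> - Xcoupled Y eps epss n \<omega>\<bar> powr \<alpha>)) sequentially"
    and moment: "(\<lambda>n. (integral\<^sup>L M
                  (\<lambda>\<omega>. \<bar>Xproc Y eps (int n) \<omega> - Xcoupled Y eps epss n \<omega>\<bar> powr \<alpha>)) powr (1 / \<alpha>))
                 \<in> O(\<lambda>n. \<rho> ^ n)"
  shows "\<exists>\<delta>>0. \<exists>\<sigma>. 0 < \<sigma> \<and> \<sigma> < 1 \<and>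
           (\<lambda>n. SUP \<xi>\<in>{\<xi>. \<bar>\<xi> - Inf {x. measure M {\<omega>\<in>space M. Xproc Y eps 0 \<omega> \<le> x} \<ge> \<tau>}\<bar> \<le> \<delta>}.
                 sqrt (integral\<^sup>L M (\<lambda>\<omega>. \<bar>of_bool (Xproc Y eps (int n) \<omega> < \<xi>)
                                         - of_bool (Xcoupled Y eps epss n \<omega> < \<xi>)\<bar> ^ 2 :: real)))
           \<in> O(\<lambda>n. \<sigma> ^ n)"
proof -
  interpret P: prob_space M by (rule M)
  define X where "X = (\<lambda>n::nat. Xproc Y eps (int n))"
  define X' where "X' = (\<lambda>n. Xcoupled Y eps epss n)"
  define F where "F = (\<lambda>x. measure M {\<omega>\<in>space M. Xproc Y eps 0 \<omega> \<le> x})"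
  define \<xi>0 where "\<xi>0 = Inf {x. F x \<ge> \<tau>}"
  obtain r L where r: "r > 0" and L: "L-lipschitz_on {\<xi>0 - r..\<xi>0 + r} F"
    using lip unfolding \<xi>0_def F_def by blast
  have L0: "0 \<le> L" using L by (simp add: lipschitz_on_def)
  have measX[measurable]: "X n \<in> borel_measurable M" for n
    unfolding X_def using meas_Xproc[OF meas_eps meas_Y] .
  have measX'[measurable]: "X' n \<in> borel_measurable M" for n
    unfolding X'_def using meas_Xcoupled[OF meas_eps meas_epss meas_Y] .
  have measX0[measurable]: "Xproc Y eps 0 \<in> borel_measurable M"
    using meas_Xproc[OF meas_eps meas_Y] .
  have dist: "distr M borel (X n) = distr M borel (Xproc Y eps 0)" for n
    using stationary[OF M meas_eps meas_epss indep ident_eps meas_Y, of "int n"]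
      stationary[OF M meas_eps meas_epss indep ident_eps meas_Y, of 0]
    by (simp add: X_def)
  have interval: "P.prob {\<omega>\<in>space M. a < X n \<omega> \<and> X n \<omega> \<le> b} \<le> L * (b - a)"
     if "\<xi>0 - r \<le> a" "a \<le> b" "b \<le> \<xi>0 + r" for a b n
  proof -
    have "P.prob {\<omega>\<in>space M. a < X n \<omega> \<and> X n \<omega> \<le> b} = measure (distr M borel (X n)) {a<..b}"
      by (subst measure_distr) (auto intro!: arg_cong[where f="measure M"])
    also have "\<dots> = measure (distr M borel (Xproc Y eps 0)) {a<..b}" by (simp add: dist)
    also have "\<dots> = P.prob ({\<omega>\<in>space M. Xproc Y eps 0 \<omega> \<le> b} - {\<omega>\<in>space M. Xproc Y eps 0 \<omega> \<le> a})"
      by (subst measure_distr) (auto intro!: arg_cong[where f="measure M"])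
    also have "\<dots> = F b - F a" unfolding F_def
      by (subst P.finite_measure_Diff) (use that in auto)
    also have "\<dots> \<le> L * (b - a)" using lipschitz_onD[OF L, of b a] that by (simp add: dist_real_def)
    finally show ?thesis .
  qed
  from moment obtain c where c: "c > 0" and
    evc: "eventually (\<lambda>n. norm ((integral\<^sup>L M (\<lambda>\<omega>. \<bar>X n \<omega> - X' n \<omega>\<bar> powr \<alpha>)) powr (1/\<alpha>)) \<le> c * norm (\<rho> ^ n)) sequentially"
    unfolding X_def X'_def by (elim landau_o.bigE) auto
  define s where "s = sqrt \<rho>"
  have s: "0 < s" "s < 1" "s * s = \<rho>" using rho by (auto simp: s_def)
  define q where "q = max s (s powr \<alpha>)"
  have sa: "s powr \<alpha> < 1" using powr_less_mono2[of \<alpha> s 1] s alpha by simp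
  have q: "0 < q" "q < 1" using s sa by (auto simp: q_def)
  have key: "integral\<^sup>L M (\<lambda>\<omega>. \<bar>of_bool (X n \<omega> < \<xi>) - of_bool (X' n \<omega> < \<xi>)\<bar> ^ 2 :: real)
      \<le> (2*L + c powr \<alpha>) * q ^ n"
    if n: "integrable M (\<lambda>\<omega>. \<bar>X n \<omega> - X' n \<omega>\<bar> powr \<alpha>)"
       "norm ((integral\<^sup>L M (\<lambda>\<omega>. \<bar>X n \<omega> - X' n \<omega>\<bar> powr \<alpha>)) powr (1/\<alpha>)) \<le> c * norm (\<rho> ^ n)"
       "s^n \<le> r/2"
    and \<xi>: "\<bar>\<xi> - \<xi>0\<bar> \<le> r/2" for n \<xi>
  proof -
    define h where "h = s^n"
    have h: "h > 0" using s by (simp add: h_def)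
    define D where "D = (\<lambda>\<omega>. \<bar>X n \<omega> - X' n \<omega>\<bar> powr \<alpha>)"
    have [measurable]: "D \<in> borel_measurable M" unfolding D_def by measurable
    define m where "m = integral\<^sup>L M D"
    have m0: "0 \<le> m" unfolding m_def D_def by (rule Bochner_Integration.integral_nonneg) simp
    define E where "E = {\<omega>\<in>space M. (X n \<omega> < \<xi>) \<noteq> (X' n \<omega> < \<xi>)}"
    have [measurable]: "E \<in> sets M" unfolding E_def by measurable
    have A1: "{\<omega>\<in>space M. \<xi> - h < X n \<omega> \<and> X n \<omega> \<le> \<xi> + h} \<in> sets M" by measurable
    have A2: "{\<omega>\<in>space M. h powr \<alpha> \<le> D \<omega>} \<in> sets M" by measurable
    have "integral\<^sup>L M (\<lambda>\<omega>. \<bar>of_bool (X n \<omega> < \<xi>) - of_bool (X' n \<omega> < \<xi>)\<bar> ^ 2 :: real)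
        = integral\<^sup>L M (indicator E :: 'a \<Rightarrow> real)"
      by (rule Bochner_Integration.integral_cong) (auto simp: indicator_def E_def)
    also have "\<dots> = P.prob E" by simp
    also have "\<dots> \<le> P.prob ({\<omega>\<in>space M. \<xi> - h < X n \<omega> \<and> X n \<omega> \<le> \<xi> + h} \<union> {\<omega>\<in>space M. h powr \<alpha> \<le> D \<omega>})"
    proof (rule P.finite_measure_mono)
      show "E \<subseteq> {\<omega>\<in>space M. \<xi> - h < X n \<omega> \<and> X n \<omega> \<le> \<xi> + h} \<union> {\<omega>\<in>space M. h powr \<alpha> \<le> D \<omega>}"
      proof
        fix \<omega> assume w: "\<omega> \<in> E"
        show "\<omega> \<in> {\<omega>\<in>space M. \<xi> - h < X n \<omega> \<and> X n \<omega> \<le> \<xi> + h} \<union> {\<omega>\<in>space M. h powr \<alpha> \<le> D \<omega>}"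
        proof (cases "h \<le> \<bar>X n \<omega> - X' n \<omega>\<bar>")
          case True
          then have "h powr \<alpha> \<le> D \<omega>" unfolding D_def using h alpha by (intro powr_mono2) auto
          then show ?thesis using w by (auto simp: E_def)
        next
          case False
          then show ?thesis using w by (auto simp: E_def)
        qed
      qed
    qed (use A1 A2 in auto)
    also have "\<dots> \<le> P.prob {\<omega>\<in>space M. \<xi> - h < X n \<omega> \<and> X n \<omega> \<le> \<xi> + h} + P.prob {\<omega>\<in>space M. h powr \<alpha> \<le> D \<omega>}"
      by (rule measure_subadditive[OF A1 A2]) (simp_all add: P.emeasure_eq_measure)
    also have "P.prob {\<omega>\<in>space M. \<xi> - h < X n \<omega> \<and> X n \<omega> \<le> \<xi> + h} \<le> L * (2 * h)"
    proof -
      have i0: "\<xi> - \<xi>0 \<le> r/2 \<and> - (\<xi> - \<xi>0) \<le> r/2" using \<xi> by (simp only: abs_le_iff)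
      have i1: "\<xi>0 - r \<le> \<xi> - h" "\<xi> + h \<le> \<xi>0 + r" using i0 n(3) unfolding h_def by linarith+
      have i2: "\<xi> - h \<le> \<xi> + h" using h by simp
      have "(\<xi> + h) - (\<xi> - h) = 2*h" by simp
      then show ?thesis using interval[OF i1(1) i2 i1(2), of n] by simp
    qed
    also have "P.prob {\<omega>\<in>space M. h powr \<alpha> \<le> D \<omega>} \<le> m / h powr \<alpha>"
      unfolding m_def using h n(1) by (intro integral_Markov_inequality_measure[where A="{}"]) (auto simp: D_def)
    also have "m / h powr \<alpha> \<le> c powr \<alpha> * q ^ n"
    proof -
      have m1: "m powr (1/\<alpha>) \<le> c * (h * h)"
        using n(2) s rho by (simp add: m_def D_def h_def power_mult_distrib[symmetric])
      have "m = (m powr (1/\<alpha>)) powr \<alpha>" using m0 alpha by (simp add: powr_powr)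
      also have "\<dots> \<le> (c * (h * h)) powr \<alpha>" using m1 alpha by (intro powr_mono2) auto
      also have "\<dots> = c powr \<alpha> * h powr \<alpha> * h powr \<alpha>" using c h by (simp add: powr_mult)
      finally have le: "m / h powr \<alpha> \<le> c powr \<alpha> * h powr \<alpha>" using h by (simp add: divide_simps)
      have hp: "h powr \<alpha> = (s powr \<alpha>) ^ n" unfolding h_def using s
        by (simp add: powr_power powr_realpow[symmetric] powr_powr mult.commute)
      have "(s powr \<alpha>) ^ n \<le> q ^ n" using s by (intro power_mono) (auto simp: q_def)
      then have "c powr \<alpha> * h powr \<alpha> \<le> c powr \<alpha> * q ^ n" unfolding hp by (intro mult_left_mono) auto
      then show ?thesis using le by linarith
    qed
    also have "L * (2 * h) \<le> 2 * L * q ^ n"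
      using L0 s by (auto simp: h_def q_def intro!: mult_left_mono power_mono)
    finally show ?thesis by (simp add: algebra_simps)
  qed
  define K where "K = 2*L + c powr \<alpha>"
  have K0: "0 \<le> K" using L0 by (simp add: K_def)
  have "(\<lambda>n. s^n) \<longlonglongrightarrow> 0" by (rule LIMSEQ_power_zero) (use s in simp)
  then have evs: "eventually (\<lambda>n. s^n < r/2) sequentially" using r by (intro order_tendstoD(2)) auto
  have ev: "eventually (\<lambda>n. integrable M (\<lambda>\<omega>. \<bar>X n \<omega> - X' n \<omega>\<bar> powr \<alpha>) \<and>
       norm ((integral\<^sup>L M (\<lambda>\<omega>. \<bar>X n \<omega> - X' n \<omega>\<bar> powr \<alpha>)) powr (1/\<alpha>)) \<le> c * norm (\<rho> ^ n) \<and>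
       s^n < r/2) sequentially"
    using integ evc evs unfolding X_def X'_def by eventually_elim auto
  define S where "S = {\<xi>. \<bar>\<xi> - \<xi>0\<bar> \<le> r/2}"
  have main: "(\<lambda>n. SUP \<xi>\<in>S. sqrt (integral\<^sup>L M (\<lambda>\<omega>. \<bar>of_bool (X n \<omega> < \<xi>)
                                         - of_bool (X' n \<omega> < \<xi>)\<bar> ^ 2 :: real))) \<in> O(\<lambda>n. sqrt q ^ n)"
  proof (rule bigoI[where c="sqrt K"])
    show "eventually (\<lambda>n. norm (SUP \<xi>\<in>S. sqrt (integral\<^sup>L M (\<lambda>\<omega>. \<bar>of_bool (X n \<omega> < \<xi>)
                                         - of_bool (X' n \<omega> < \<xi>)\<bar> ^ 2 :: real))) \<le> sqrt K * norm (sqrt q ^ n)) sequentially"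
      using ev
    proof eventually_elim
      case (elim n)
      define f where "f \<xi> = sqrt (integral\<^sup>L M (\<lambda>\<omega>. \<bar>of_bool (X n \<omega> < \<xi>)
                                         - of_bool (X' n \<omega> < \<xi>)\<bar> ^ 2 :: real))" for \<xi>
      have b: "f \<xi> \<le> sqrt K * sqrt q ^ n" if "\<xi> \<in> S" for \<xi>
      proof -
        have "f \<xi> \<le> sqrt (K * q ^ n)" unfolding f_def K_def
          using key[of n \<xi>] elim that by (auto simp: S_def)
        also have "\<dots> = sqrt K * sqrt q ^ n" by (simp add: real_sqrt_mult real_sqrt_power)
        finally show ?thesis .
      qed
      have Sne: "\<xi>0 \<in> S" using r by (simp add: S_def)
      have le: "(SUP \<xi>\<in>S. f \<xi>) \<le> sqrt K * sqrt q ^ n"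
        using Sne b by (intro cSUP_least) auto
      have "f \<xi>0 \<le> (SUP \<xi>\<in>S. f \<xi>)"
        using Sne b by (intro cSUP_upper) (auto simp: bdd_above_def)
      moreover have "0 \<le> f \<xi>0" unfolding f_def
        by (intro real_sqrt_ge_zero Bochner_Integration.integral_nonneg) auto
      ultimately have "0 \<le> (SUP \<xi>\<in>S. f \<xi>)" by linarith
      then show ?case using le q by (simp add: f_def)
    qed
  qed
  have "\<exists>\<delta>>0. \<exists>\<sigma>. 0 < \<sigma> \<and> \<sigma> < 1 \<and>
    (\<lambda>n. SUP \<xi>\<in>{\<xi>. \<bar>\<xi> - \<xi>0\<bar> \<le> \<delta>}. sqrt (integral\<^sup>L M (\<lambda>\<omega>. \<bar>of_bool (X n \<omega> < \<xi>)
                                         - of_bool (X' n \<omega> < \<xi>)\<bar> ^ 2 :: real))) \<in> O(\<lambda>n. \<sigma> ^ n)"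
    using main r q unfolding S_def by (intro exI[of _ "r/2"] conjI exI[of _ "sqrt q"]) auto
  then show ?thesis unfolding \<xi>0_def F_def X_def X'_def .
qed

end
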